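(* Let $(\mathcal{G}(u_0,v_0),-\Omega^2\,du\,dv)$ with radial function $r$ and stress-energy components $T_{uu},T_{uv},T_{vv}$ be as described in the context, satisfying assumptions (I)–(VII). Suppose there exists $\delta>0$ such that, with $\mathcal{W}=\mathcal{W}(\delta)$, condition (A), namely $T_{uv}\Omega^{-2}<\frac{1}{4r^2}$, holds at every point of $\mathcal{A}\cap\mathcal{W}$. If $\mathcal{G}(u_0,v_0)$ does not contain a marginally trapped tube which is asymptotic to the event horizon, then $\mathcal{W}\cap\mathcal{R}$ contains a rectangle $K(u_1,v_1)=[0,u_1]\times[v_1,\infty)$ for some $u_1\in(0,u_0]$, $v_1\in[v_0,\infty)$.
   Context: Fix double null coordinates $(u,v)$ on $\mathbb{R}^2$ with Minkowski metric $-du\,dv$, time-oriented so that $u$ and $v$ increase toward the future. For $u,v>0$ let $K(u,v)=[0,u]\times[v,\infty)$. Fix $u_0,v_0>0$, $\mathcal{C}_{in}=[0,u_0]\times\{v_0\}$, $\mathcal{C}_{out}=\{0\}\times[v_0,\infty)$; causal notions $J^\pm,I^\pm$ refer to $K(u_0,v_0)$. Let $\mathcal{G}(u_0,v_0)\subset K(u_0,v_0)$ be a globally hyperbolic, relatively open subset containing $\mathcal{C}_{in}\cup\mathcal{C}_{out}$, with metric $-\Omega^2du\,dv$ ($\Omega>0$ smooth), smooth radial function $r\ge0$ with $r>0$ on $\mathcal{C}_{in}\cup\mathcal{C}_{out}$, and smooth functions $T_{uu},T_{uv},T_{vv}$ (components of the stress-energy tensor of the spherically symmetric spacetime $-\Omega^2du\,dv+r^2g_{S^2}$)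 such that $\partial_u(\Omega^{-2}\partial_u r)=-r\Omega^{-2}T_{uu}$, $\partial_v(\Omega^{-2}\partial_v r)=-r\Omega^{-2}T_{vv}$, $\partial_u m=2r^2\Omega^{-2}(T_{uv}\partial_u r-T_{uu}\partial_v r)$, $\partial_v m=2r^2\Omega^{-2}(T_{uv}\partial_v r-T_{vv}\partial_u r)$, with Hawking mass $m=\frac r2(1+4\Omega^{-2}\partial_u r\partial_v r)$. Define $\mathcal{R}=\{\partial_v r>0,\partial_u r<0\}$, $\mathcal{T}=\{\partial_v r<0,\partial_u r<0\}$, $\mathcal{A}=\{\partial_v r=0,\partial_u r<0\}$ (the marginally trapped tube), $r_+=\sup_{\mathcal{C}_{out}}r$, $m_+=\sup_{\mathcal{C}_{out}}m$, and for $\delta>0$, $\mathcal{W}(\delta)=\{(u,v)\in\mathcal{G}(u_0,v_0): r(u,v)\ge r_+-\delta\}$. Assumptions: (I) $T_{uu},T_{uv},T_{vv}\ge0$; (II) $J^-(\mathcal{G}(u_0,v_0))\subset\mathcal{G}(u_0,v_0)$; (III) $r\le r_+<\infty$ along $\mathcal{C}_{out}$; (IV) $0\le m\le m_+<\infty$ along $\mathcal{C}_{out}$; (V) $\partial_u r<0$ along $\mathcal{C}_{out}$; (VI) $\partial_v r>0$ along $\mathcal{C}_{out}$; (VII) (closures in $K(u_0,v_0)$) if $p\in\overline{\mathcal{R}}$, $q\in\overline{\mathcal{R}}\cap I^-(p)$ and $J^-(p)\cap J^+(q)\setminus\{p\}\subset\mathcal{R}\cup\mathcal{A}$, then $p\in\mathcal{R}\cup\mathcal{A}$.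 The curve $\mathcal{C}_{out}$ is regarded as the event horizon, and $i^+$ denotes the point $(0,\infty)$ of $\overline{K}(u_0,v_0)=[0,u_0]\times[v_0,\infty]$. A marginally trapped tube (portion of $\mathcal{A}$) is asymptotic to the event horizon if it has $i^+$ as a limit point in $\overline{K}(u_0,v_0)$, i.e. for every sufficiently small $u>0$ there is $v>v_0$ with $(u,v)$ in it. *)

theory Defs
  imports "HOL-Analysis.Analysis"
begin

text \<open>Points of the quotient (u,v)-plane are pairs (u,v) :: real \<times> real.\<close>

definition Kset :: "real \<Rightarrow> real \<Rightarrow> (real \<times> real) set" where
  "Kset u v = {0..u} \<times> {v..}"

text \<open>Causal notions in K(u0,v0) for the metric -du dv (u, v increasing to the future).\<close>
definition Jminus :: "(real \<times> real) set \<Rightarrow> real \<times> real \<Rightarrow> (real \<times> real) set" where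
  "Jminus K p = {q \<in> K. fst q \<le> fst p \<and> snd q \<le> snd p}"
definition Jplus :: "(real \<times> real) set \<Rightarrow> real \<times> real \<Rightarrow> (real \<times> real) set" where
  "Jplus K p = {q \<in> K. fst p \<le> fst q \<and> snd p \<le> snd q}"
definition Iminus :: "(real \<times> real) set \<Rightarrow> real \<times> real \<Rightarrow> (real \<times> real) set" where
  "Iminus K p = {q \<in> K. fst q < fst p \<and> snd q < snd p}"
definition Jminus_set :: "(real \<times> real) set \<Rightarrow> (real \<times> real) set \<Rightarrow> (real \<times> real) set" where
  "Jminus_set K S = (\<Union>p\<in>S. Jminus K p)"

definition closure_in :: "(real \<times> real) set \<Rightarrow> (real \<times> real) set \<Rightarrow> (real \<times> real) set" where
  "closure_in K S = K \<inter> closure S"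

text \<open>Causal curves in G (conformally flat metric -\<Omega>^2 du dv): continuous curves with
  nondecreasing null coordinates; global hyperbolicity: compact causal diamonds.\<close>
definition causal_curve :: "(real \<times> real) set \<Rightarrow> (real \<Rightarrow> real \<times> real) \<Rightarrow> bool" where
  "causal_curve G \<gamma> \<longleftrightarrow> continuous_on {0..1} \<gamma> \<and> \<gamma> ` {0..1} \<subseteq> G \<and>
     mono_on {0..1} (fst \<circ> \<gamma>) \<and> mono_on {0..1} (snd \<circ> \<gamma>)"

definition causal_diamond :: "(real \<times> real) set \<Rightarrow> real \<times> real \<Rightarrow> real \<times> real \<Rightarrow> (real \<times> real) set" where
  "causal_diamond G p q = {x. \<exists>\<gamma>. causal_curve G \<gamma> \<and> \<gamma> 0 = p \<and> \<gamma> 1 = q \<and> x \<in> \<gamma> ` {0..1}}"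

definition globally_hyperbolic :: "(real \<times> real) set \<Rightarrow> bool" where
  "globally_hyperbolic G \<longleftrightarrow> (\<forall>p\<in>G. \<forall>q\<in>G. compact (causal_diamond G p q))"

definition pu :: "(real \<times> real \<Rightarrow> real) \<Rightarrow> real \<times> real \<Rightarrow> real" where
  "pu f p = deriv (\<lambda>s. f (s, snd p)) (fst p)"
definition pv :: "(real \<times> real \<Rightarrow> real) \<Rightarrow> real \<times> real \<Rightarrow> real" where
  "pv f p = deriv (\<lambda>s. f (fst p, s)) (snd p)"

fun iter_partial :: "bool list \<Rightarrow> (real \<times> real \<Rightarrow> real) \<Rightarrow> real \<times> real \<Rightarrow> real" where
  "iter_partial [] f = f"
| "iter_partial (b # ds) f = (if b then pu else pv) (iter_partial ds f)"

definition smooth_on :: "(real \<times> real) set \<Rightarrow> (real \<times> real \<Rightarrow> real) \<Rightarrow> bool" where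
  "smooth_on S f \<longleftrightarrow> (\<exists>U. open U \<and> S \<subseteq> U \<and>
      (\<forall>ds. \<forall>p\<in>U. iter_partial ds f differentiable (at p)))"

definition hawking_mass :: "(real \<times> real \<Rightarrow> real) \<Rightarrow> (real \<times> real \<Rightarrow> real) \<Rightarrow> real \<times> real \<Rightarrow> real" where
  "hawking_mass \<Omega> r p = r p / 2 * (1 + 4 * pu r p * pv r p / (\<Omega> p)\<^sup>2)"

end

theory Submission
  imports Defs
begin


lemma smooth_diff: "smooth_on G f \<Longrightarrow> p \<in> G \<Longrightarrow> iter_partial ds f differentiable (at p)"
  unfolding smooth_on_def by blast

lemma D_u:
  assumes "f differentiable (at p)"
  shows "((\<lambda>s. f (s, snd p)) has_real_derivative pu f p) (at (fst p))"
proof -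
  have d1: "(\<lambda>s. (s, snd p)) differentiable (at (fst p))"
    by simp
  have d2: "f differentiable (at ((\<lambda>s. (s, snd p)) (fst p)))" using assms by simp
  have "(f \<circ> (\<lambda>s. (s, snd p))) differentiable (at (fst p))"
    using differentiable_chain_at[OF d1 d2] .
  then show ?thesis unfolding pu_def
    using DERIV_deriv_iff_real_differentiable by (simp add: o_def)
qed

lemma D_v:
  assumes "f differentiable (at p)"
  shows "((\<lambda>s. f (fst p, s)) has_real_derivative pv f p) (at (snd p))"
proof -
  have d1: "(\<lambda>s. (fst p, s)) differentiable (at (snd p))"
    by simp
  have d2: "f differentiable (at ((\<lambda>s. (fst p, s)) (snd p)))" using assms by simp
  have "(f \<circ> (\<lambda>s. (fst p, s))) differentiable (at (snd p))"
    using differentiable_chain_at[OF d1 d2] .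
  then show ?thesis unfolding pv_def
    using DERIV_deriv_iff_real_differentiable by (simp add: o_def)
qed

lemma cont_gt:
  fixes f :: "real \<times> real \<Rightarrow> real"
  assumes "isCont f p" "f p > c"
  shows "\<exists>e>0. \<forall>x. dist x p < e \<longrightarrow> f x > c"
proof -
  from assms(1) have "\<forall>e>0. \<exists>d>0. \<forall>x'. dist x' p < d \<longrightarrow> dist (f x') (f p) < e"
    using continuous_at_eps_delta by blast
  from this[rule_format, of "f p - c"] assms(2) obtain d where "d>0" "\<forall>x'. dist x' p < d \<longrightarrow> dist (f x') (f p) < f p - c"
    by auto
  then show ?thesis by (auto simp: dist_real_def abs_less_iff)
qed

lemma cont_lt:
  fixes f :: "real \<times> real \<Rightarrow> real"
  assumes "isCont f p" "f p < c"
  shows "\<exists>e>0. \<forall>x. dist x p < e \<longrightarrow> f x < c"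
  using cont_gt[where f="\<lambda>x. - f x" and p=p and c="-c"] assms by auto

lemma dist_u: "dist (a::real, b::real) (c, b) = \<bar>a - c\<bar>"
  by (simp add: dist_Pair_Pair dist_real_def)
lemma dist_v: "dist (a::real, b::real) (a, c) = \<bar>b - c\<bar>"
  by (simp add: dist_Pair_Pair dist_real_def)

lemma deriv_div_sq:
  fixes f g :: "real \<Rightarrow> real"
  assumes "DERIV f x :> a" "DERIV g x :> b" "g x \<noteq> 0"
  shows "DERIV (\<lambda>t. f t / (g t)^2) x :> deriv (\<lambda>t. f t / (g t)^2) x"
proof -
  have g2: "DERIV (\<lambda>t. (g t)^2) x :> 2 * b * g x"
    using assms(2) by (auto intro!: derivative_eq_intros)
  have "DERIV (\<lambda>t. f t / (g t)^2) x :> (a * (g x)^2 - f x * (2 * b * g x)) / ((g x)^2 * (g x)^2)"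
    using DERIV_divide[OF assms(1) g2] assms(3) by simp
  then show ?thesis using DERIV_imp_deriv by metis
qed

lemma transv:
  fixes R Ru Rv Om :: "real \<Rightarrow> real" and u a b c T Tq :: real
  assumes dR: "DERIV R u :> Ru u" and dRu: "DERIV Ru u :> a" and dRv: "DERIV Rv u :> b"
    and dO: "DERIV Om u :> c" and Opos: "Om u > 0" and Rv0: "Rv u = 0" and Runeg: "Ru u < 0"
    and Rpos: "R u > 0"
    and eqm: "deriv (\<lambda>s. R s / 2 * (1 + 4 * Ru s * Rv s / (Om s)^2)) u
               = 2 * (R u)^2 / (Om u)^2 * (T * Ru u - Tq * Rv u)"
    and cA: "T / (Om u)^2 < 1 / (4 * (R u)^2)"
  shows "b < 0"
proof -
  have "DERIV (\<lambda>s. R s / 2 * (1 + 4 * Ru s * Rv s / (Om s)^2)) u :> (Ru u / 2 + 2 * R u * Ru u * b / (Om u)^2)"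
    using dR dRu dRv dO Opos Rv0
    by (auto intro!: derivative_eq_intros simp: field_simps power2_eq_square)
  then have "Ru u / 2 + 2 * R u * Ru u * b / (Om u)^2 = 2 * (R u)^2 / (Om u)^2 * (T * Ru u)"
    using eqm Rv0 DERIV_imp_deriv by fastforce
  then have e: "Ru u * (1/2 + 2 * R u * b / (Om u)^2 - 2 * (R u)^2 * T / (Om u)^2) = 0"
    by (simp add: field_simps)
  have "1/2 + 2 * R u * b / (Om u)^2 - 2 * (R u)^2 * T / (Om u)^2 = 0"
    using e Runeg by simp
  moreover have "2 * (R u)^2 * T / (Om u)^2 < 1/2"
  proof -
    have "T / (Om u)^2 * (4 * (R u)^2) < 1" using cA Rpos by (simp add: field_simps)
    then show ?thesis by (simp add: field_simps)
  qed
  ultimately have "2 * R u * b / (Om u)^2 < 0" by linarith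
  then show ?thesis using Rpos Opos by (simp add: divide_less_0_iff zero_less_mult_iff mult_less_0_iff)
qed


theorem proposition4:
  fixes u0 v0 \<delta> :: real
    and G :: "(real \<times> real) set"
    and \<Omega> r Tuu Tuv Tvv :: "real \<times> real \<Rightarrow> real"
  defines "K \<equiv> Kset u0 v0"
    and "Cin \<equiv> {0..u0} \<times> {v0}"
    and "Cout \<equiv> {0} \<times> {v0..}"
    and "m \<equiv> hawking_mass \<Omega> r"
    and "R \<equiv> {p \<in> G. pv r p > 0 \<and> pu r p < 0}"
    and "A \<equiv> {p \<in> G. pv r p = 0 \<and> pu r p < 0}"
    and "W \<equiv> {p \<in> G. r p \<ge> Sup (r ` ({0} \<times> {v0..})) - \<delta>}"
  assumes u0_pos: "0 < u0" and v0_pos: "0 < v0"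
    and G_sub: "G \<subseteq> K"
    and G_open: "openin (top_of_set K) G"
    and G_gh: "globally_hyperbolic G"
    and G_init: "Cin \<union> Cout \<subseteq> G"
    and Omega_smooth: "smooth_on G \<Omega>" and Omega_pos: "\<forall>p\<in>G. \<Omega> p > 0"
    and r_smooth: "smooth_on G r" and r_nonneg: "\<forall>p\<in>G. r p \<ge> 0"
    and r_pos_init: "\<forall>p\<in>Cin \<union> Cout. r p > 0"
    and T_smooth: "smooth_on G Tuu" "smooth_on G Tuv" "smooth_on G Tvv"
    and eq_ru: "\<forall>p\<in>G. pu (\<lambda>q. pu r q / (\<Omega> q)\<^sup>2) p = - r p * Tuu p / (\<Omega> p)\<^sup>2"
    and eq_rv: "\<forall>p\<in>G. pv (\<lambda>q. pv r q / (\<Omega> q)\<^sup>2) p = - r p * Tvv p / (\<Omega> p)\<^sup>2"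
    and eq_mu: "\<forall>p\<in>G. pu m p = 2 * (r p)\<^sup>2 / (\<Omega> p)\<^sup>2 * (Tuv p * pu r p - Tuu p * pv r p)"
    and eq_mv: "\<forall>p\<in>G. pv m p = 2 * (r p)\<^sup>2 / (\<Omega> p)\<^sup>2 * (Tuv p * pv r p - Tvv p * pu r p)"
    and I: "\<forall>p\<in>G. Tuu p \<ge> 0 \<and> Tuv p \<ge> 0 \<and> Tvv p \<ge> 0"
    and II: "Jminus_set K G \<subseteq> G"
    and III: "bdd_above (r ` Cout)"
    and IV: "\<forall>p\<in>Cout. m p \<ge> 0" "bdd_above (m ` Cout)"
    and V: "\<forall>p\<in>Cout. pu r p < 0"
    and VI: "\<forall>p\<in>Cout. pv r p > 0"
    and VII: "\<forall>p q. p \<in> closure_in K R \<longrightarrow> q \<in> closure_in K R \<inter> Iminus K p \<longrightarrow>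
                 Jminus K p \<inter> Jplus K q - {p} \<subseteq> R \<union> A \<longrightarrow> p \<in> R \<union> A"
    and delta_pos: "\<delta> > 0"
    and condA: "\<forall>p\<in>A \<inter> W. Tuv p / (\<Omega> p)\<^sup>2 < 1 / (4 * (r p)\<^sup>2)"
    and no_asymptotic_MTT:
      "\<not> (\<exists>\<epsilon>>0. \<forall>u. 0 < u \<and> u < \<epsilon> \<longrightarrow> (\<exists>v>v0. (u, v) \<in> A))"
  shows "\<exists>u1 v1. 0 < u1 \<and> u1 \<le> u0 \<and> v0 \<le> v1 \<and> Kset u1 v1 \<subseteq> W \<inter> R"
proof -
  have Kdef: "K = {0..u0} \<times> {v0..}" using K_def Kset_def by simp
  have dr: "\<And>p. p \<in> G \<Longrightarrow> r differentiable (at p)"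
    using smooth_diff[OF r_smooth, of _ "[]"] by simp
  have dru: "\<And>p. p \<in> G \<Longrightarrow> pu r differentiable (at p)"
    using smooth_diff[OF r_smooth, of _ "[True]"] by simp
  have drv: "\<And>p. p \<in> G \<Longrightarrow> pv r differentiable (at p)"
    using smooth_diff[OF r_smooth, of _ "[False]"] by simp
  have dO: "\<And>p. p \<in> G \<Longrightarrow> \<Omega> differentiable (at p)"
    using smooth_diff[OF Omega_smooth, of _ "[]"] by simp
  have cr: "\<And>p. p \<in> G \<Longrightarrow> isCont r p"
    using dr differentiable_imp_continuous_within by blast
  have crv: "\<And>p. p \<in> G \<Longrightarrow> isCont (pv r) p"
    using drv differentiable_imp_continuous_within by blast
  have Gopen': "\<forall>x\<in>G. \<exists>e>0. \<forall>x'\<in>K. dist x' x < e \<longrightarrow> x' \<in> G"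
    using G_open openin_euclidean_subtopology_iff by blast
  have past: "(s, w) \<in> G" if "(u, v) \<in> G" "0 \<le> s" "s \<le> u" "v0 \<le> w" "w \<le> v" for u v s w
  proof -
    have "(u, v) \<in> K" using that G_sub by auto
    then have "(s, w) \<in> Jminus K (u, v)" using that by (auto simp: Jminus_def Kdef)
    then have "(s, w) \<in> Jminus_set K G" using that(1) by (auto simp: Jminus_set_def)
    then show ?thesis using II by auto
  qed
  have ru_neg: "pu r (u, v) < 0" if uv: "(u, v) \<in> G" for u v
  proof -
    have inK: "(u, v) \<in> K" using uv G_sub by auto
    define g where "g = (\<lambda>t. pu r (t, v) / (\<Omega> (t, v))^2)"
    have gd: "\<exists>y. DERIV g s :> y \<and> y \<le> 0" if s: "0 \<le> s" "s \<le> u" for s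
    proof -
      have sG: "(s, v) \<in> G" using past[OF uv s] inK by (auto simp: Kdef)
      have h1: "DERIV (\<lambda>t. pu r (t, v)) s :> pu (pu r) (s, v)"
        using D_u[OF dru[OF sG]] by simp
      have h2: "DERIV (\<lambda>t. \<Omega> (t, v)) s :> pu \<Omega> (s, v)"
        using D_u[OF dO[OF sG]] by simp
      have "DERIV g s :> deriv g s"
        unfolding g_def by (rule deriv_div_sq[OF h1 h2]) (use Omega_pos sG in auto)
      moreover have "deriv g s = - r (s, v) * Tuu (s, v) / (\<Omega> (s, v))\<^sup>2"
        using eq_ru[rule_format, OF sG] by (simp add: g_def pu_def)
      moreover have "- r (s, v) * Tuu (s, v) / (\<Omega> (s, v))\<^sup>2 \<le> 0"
        using r_nonneg I sG by (auto intro!: divide_nonpos_pos)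
      ultimately show ?thesis by auto
    qed
    have "g u \<le> g 0"
      by (rule DERIV_nonpos_imp_nonincreasing) (use inK gd in \<open>auto simp: Kdef\<close>)
    moreover have "g 0 < 0"
    proof -
      have "(0, v) \<in> Cout" using inK by (auto simp: Kdef Cout_def)
      then have "pu r (0, v) < 0" "\<Omega> (0, v) > 0" using V Omega_pos G_init by auto
      then show ?thesis by (simp add: g_def divide_neg_pos)
    qed
    ultimately have "g u < 0" by simp
    then show ?thesis using Omega_pos uv by (simp add: g_def divide_less_0_iff)
  qed
  define S where "S = Sup (r ` Cout)"
  have S_eq: "Sup (r ` ({0} \<times> {v0..})) = S" by (simp add: S_def Cout_def)
  have transv': "pu (pv r) (u, v) < 0"
    if uv: "(u, v) \<in> G" and z: "pv r (u, v) = 0" and rb: "r (u, v) \<ge> S - \<delta>" for u v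
  proof -
    have pA: "(u, v) \<in> A \<inter> W" using uv z rb ru_neg[OF uv] by (simp add: A_def W_def S_eq)
    have cA: "Tuv (u, v) / (\<Omega> (u, v))\<^sup>2 < 1 / (4 * (r (u, v))\<^sup>2)" using condA pA by blast
    have rpos: "r (u, v) > 0"
    proof (rule ccontr)
      assume "\<not> r (u, v) > 0"
      then have "r (u, v) = 0" using r_nonneg uv by force
      then have "Tuv (u, v) / (\<Omega> (u, v))\<^sup>2 < 0" using cA by simp
      moreover have "Tuv (u, v) / (\<Omega> (u, v))\<^sup>2 \<ge> 0" using I uv by auto
      ultimately show False by simp
    qed
    show ?thesis
    proof (rule transv[where R="\<lambda>s. r (s, v)" and Ru="\<lambda>s. pu r (s, v)" and Rv="\<lambda>s. pv r (s, v)"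
          and Om="\<lambda>s. \<Omega> (s, v)" and u=u and T="Tuv (u, v)" and Tq="Tuu (u, v)"])
      show "DERIV (\<lambda>s. r (s, v)) u :> pu r (u, v)" using D_u[OF dr[OF uv]] by simp
      show "DERIV (\<lambda>s. pu r (s, v)) u :> pu (pu r) (u, v)" using D_u[OF dru[OF uv]] by simp
      show "DERIV (\<lambda>s. pv r (s, v)) u :> pu (pv r) (u, v)" using D_u[OF drv[OF uv]] by simp
      show "DERIV (\<lambda>s. \<Omega> (s, v)) u :> pu \<Omega> (u, v)" using D_u[OF dO[OF uv]] by simp
      show "\<Omega> (u, v) > 0" using Omega_pos uv by auto
      show "pv r (u, v) = 0" by fact
      show "pu r (u, v) < 0" using ru_neg[OF uv] .
      show "r (u, v) > 0" by fact
      show "deriv (\<lambda>s. r (s, v) / 2 * (1 + 4 * pu r (s, v) * pv r (s, v) / (\<Omega> (s, v))\<^sup>2)) u =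
        2 * (r (u, v))\<^sup>2 / (\<Omega> (u, v))\<^sup>2 * (Tuv (u, v) * pu r (u, v) - Tuu (u, v) * pv r (u, v))"
        using eq_mu[rule_format, OF uv] by (simp add: m_def hawking_mass_def pu_def)
      show "Tuv (u, v) / (\<Omega> (u, v))\<^sup>2 < 1 / (4 * (r (u, v))\<^sup>2)" by fact
    qed
  qed
  have Gp_open: "\<exists>e>0. \<forall>x\<in>K. dist x p < e \<longrightarrow> x \<in> G \<and> pv r x > 0"
    if "p \<in> G" "pv r p > 0" for p
  proof -
    have "\<exists>e>0. \<forall>x'\<in>K. dist x' p < e \<longrightarrow> x' \<in> G" using Gopen' that(1) by (rule bspec)
    then obtain e1 where e1: "e1 > 0" "\<forall>x'\<in>K. dist x' p < e1 \<longrightarrow> x' \<in> G"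
      by (elim exE conjE) (rule that)
    from cont_gt[OF crv[OF that(1)] that(2)] obtain e2 where e2: "e2 > 0" "\<forall>x. dist x p < e2 \<longrightarrow> pv r x > 0"
      by blast
    have "min e1 e2 > 0" using e1 e2 by simp
    moreover have "\<forall>x\<in>K. dist x p < min e1 e2 \<longrightarrow> x \<in> G \<and> pv r x > 0"
    proof (intro ballI impI)
      fix x assume x: "x \<in> K" "dist x p < min e1 e2"
      have "dist x p < e1" "dist x p < e2" using x(2) by simp_all
      then have "x \<in> G" "pv r x > 0" using e1(2) e2(2) x(1) by blast+
      then show "x \<in> G \<and> pv r x > 0" by blast
    qed
    ultimately show ?thesis by blast
  qed
  have Cout_ne: "Cout \<noteq> {}" using Cout_def by auto
  obtain v1 where v1: "v1 \<ge> v0" "r (0, v1) > S - \<delta>"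
  proof -
    have "S - \<delta> < Sup (r ` Cout)" using S_def delta_pos by simp
    then have "\<exists>x\<in>r ` Cout. S - \<delta> < x"
      using less_cSup_iff[of "r ` Cout" "S - \<delta>"] III Cout_ne by blast
    then obtain p where "p \<in> Cout" "S - \<delta> < r p" by blast
    then show ?thesis using that unfolding Cout_def by blast
  qed
  have q0: "(0, v1) \<in> G" "pv r (0, v1) > 0" "(0, v1) \<in> Cout"
    using v1 G_init VI by (auto simp: Cout_def)
  obtain e1 where e1: "e1 > 0" "\<forall>x\<in>K. dist x (0, v1) < e1 \<longrightarrow> x \<in> G \<and> pv r x > 0"
    using Gp_open[OF q0(1,2)] by blast
  obtain e2 where e2: "e2 > 0" "\<forall>x. dist x (0, v1) < e2 \<longrightarrow> r x > S - \<delta>"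
    using cont_gt[OF cr[OF q0(1)] v1(2)] by blast
  obtain un where un: "0 < un" "un < min (min e1 e2) u0" "\<forall>v>v0. (un, v) \<notin> A"
  proof -
    have "min (min e1 e2) u0 > 0" using e1(1) e2(1) u0_pos by simp
    then obtain u where "0 < u" "u < min (min e1 e2) u0" "\<not> (\<exists>v>v0. (u, v) \<in> A)"
      using no_asymptotic_MTT by blast
    then show ?thesis using that by blast
  qed
  have unK: "(un, v1) \<in> K" using un v1 by (auto simp: Kdef)
  have r_un: "r (un, v1) > S - \<delta>" using e2(2)[rule_format, of "(un, v1)"] un by (simp add: dist_u)
  have rbound: "r (u, w) > S - \<delta>"
    if u: "0 \<le> u" "u \<le> un" and w: "v1 \<le> w"
      and row: "\<forall>w'\<in>{v1..w}. (un, w') \<in> G \<and> pv r (un, w') > 0" for u w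
  proof -
    have "r (un, v1) \<le> r (un, w)"
    proof (rule DERIV_nonneg_imp_nondecreasing[OF w])
      fix t assume t: "v1 \<le> t" "t \<le> w"
      then have "(un, t) \<in> G" "pv r (un, t) > 0" using row by auto
      then show "\<exists>y. DERIV (\<lambda>t. r (un, t)) t :> y \<and> y \<ge> 0"
        using D_v[OF dr[of "(un, t)"]] by (auto intro!: exI[of _ "pv r (un, t)"])
    qed
    moreover have "r (un, w) \<le> r (u, w)"
    proof (rule DERIV_nonpos_imp_nonincreasing[OF u(2)])
      fix s assume s: "u \<le> s" "s \<le> un"
      have "(un, w) \<in> G" using row w by auto
      then have sG: "(s, w) \<in> G" using past[of un w s w] s u w v1 by auto
      then show "\<exists>y. DERIV (\<lambda>s. r (s, w)) s :> y \<and> y \<le> 0"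
        using D_u[OF dr[OF sG]] ru_neg[OF sG] by (auto intro!: exI[of _ "pu r (s, w)"])
    qed
    ultimately show ?thesis using r_un by linarith
  qed
  define P where "P v \<longleftrightarrow> (\<forall>u\<in>{0..un}. \<forall>w\<in>{v1..v}. (u, w) \<in> G \<and> pv r (u, w) > 0)" for v
  have P1: "P v1"
    unfolding P_def
  proof (intro ballI)
    fix u w assume "u \<in> {0..un}" "w \<in> {v1..v1}"
    then show "(u, w) \<in> G \<and> pv r (u, w) > 0"
      using e1(2)[rule_format, of "(u, v1)"] un v1 by (auto simp: Kdef dist_u)
  qed
  have Pmono: "P v'" if "P v" "v' \<le> v" for v v'
    using that unfolding P_def by auto
  have EXT: "\<exists>\<eta>>0. P (v + \<eta>)" if v: "v1 \<le> v" "P v" for v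
  proof -
    define Gp where "Gp = {x \<in> G. pv r x > 0}"
    have "openin (top_of_set K) Gp"
      unfolding openin_euclidean_subtopology_iff
    proof (intro conjI ballI)
      show "Gp \<subseteq> K" using G_sub Gp_def by auto
      fix x assume "x \<in> Gp"
      then have xg: "x \<in> G" "pv r x > 0" by (auto simp: Gp_def)
      have "\<exists>e>0. \<forall>x'\<in>K. dist x' x < e \<longrightarrow> x' \<in> G \<and> pv r x' > 0" by (rule Gp_open[OF xg])
      then show "\<exists>e>0. \<forall>x'\<in>K. dist x' x < e \<longrightarrow> x' \<in> Gp" unfolding Gp_def by blast
    qed
    then obtain T where T: "open T" "Gp = K \<inter> T" using openin_open by blast
    define C where "C = {0..un} \<times> {v}"
    have cC: "compact C" unfolding C_def by (intro compact_Times compact_Icc compact_sing)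
    have CT: "C \<subseteq> T"
    proof
      fix x assume "x \<in> C"
      then obtain u where u: "x = (u, v)" "u \<in> {0..un}" by (auto simp: C_def)
      then have "x \<in> Gp" using v unfolding P_def Gp_def by auto
      then show "x \<in> T" using T(2) by blast
    qed
    have cT: "closed (- T)" using T(1) by auto
    have "C \<inter> - T = {}" using CT by blast
    from separate_compact_closed[OF cC cT this] obtain d where d: "d > 0" "\<forall>x\<in>C. \<forall>y\<in>- T. d \<le> dist x y"
      by (elim exE conjE) (rule that)
    have "P (v + d/2)"
      unfolding P_def
    proof (intro ballI)
      fix u w assume u: "u \<in> {0..un}" and w: "w \<in> {v1..v+d/2}"
      show "(u, w) \<in> G \<and> pv r (u, w) > 0"
      proof (cases "w \<le> v")
        case True then show ?thesis using v(2) u w unfolding P_def by auto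
      next
        case False
        have inK: "(u, w) \<in> K" using u w v v1 un by (auto simp: Kdef)
        have uC: "(u, v) \<in> C" using u C_def by auto
        have dl: "dist (u, v) (u, w) < d" using False w d by (simp add: dist_v)
        have "(u, w) \<in> T"
        proof (rule ccontr)
          assume "(u, w) \<notin> T"
          then have "d \<le> dist (u, v) (u, w)" using d(2) uC by blast
          then show False using dl by simp
        qed
        then have "(u, w) \<in> Gp" using T(2) inK by blast
        then show ?thesis by (simp add: Gp_def)
      qed
    qed
    then show ?thesis using d(1) by (intro exI[of _ "d/2"]) auto
  qed
  have Pall: "\<forall>v\<ge>v1. P v"
  proof (rule ccontr)
    assume "\<not> (\<forall>v\<ge>v1. P v)"
    then obtain V where V: "V \<ge> v1" "\<not> P V" by auto
    define Ss where "Ss = {v. v1 \<le> v \<and> P v}"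
    have v1S: "v1 \<in> Ss" using P1 Ss_def by auto
    have bdd: "bdd_above Ss"
    proof (rule bdd_aboveI[of _ V])
      fix x assume "x \<in> Ss"
      then have Px: "P x" by (simp add: Ss_def)
      show "x \<le> V"
      proof (rule ccontr)
        assume "\<not> x \<le> V"
        then have "P V" using Pmono[OF Px] by simp
        then show False using V by simp
      qed
    qed
    define vs where "vs = Sup Ss"
    have claimA: "(u, w) \<in> G \<and> pv r (u, w) > 0" if uw: "u \<in> {0..un}" "v1 \<le> w" "w < vs" for u w
    proof -
      have "\<exists>x\<in>Ss. w < x" using less_cSup_iff[of Ss w] v1S bdd uw(3) unfolding vs_def by blast
      then obtain v where "v \<in> Ss" "w < v" by blast
      then have "P v" by (simp add: Ss_def)
      then show ?thesis using uw \<open>w < v\<close> unfolding P_def by auto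
    qed
    have vs_gt: "v1 < vs"
    proof -
      obtain \<eta> where "\<eta> > 0" "P (v1 + \<eta>)" using EXT[OF order_refl P1] by blast
      then have "v1 + \<eta> \<in> Ss" by (simp add: Ss_def)
      then have "v1 + \<eta> \<le> vs" unfolding vs_def using bdd by (rule cSup_upper)
      then show ?thesis using \<open>\<eta> > 0\<close> by simp
    qed
    have Rsub: "x \<in> R" if "x \<in> G" "pv r x > 0" for x
    proof -
      obtain a b where "x = (a, b)" by (cases x)
      then show ?thesis using that ru_neg[of a b] by (simp add: R_def)
    qed
    have edge: "\<forall>u\<in>{0..un}. (u, vs) \<in> G \<and> pv r (u, vs) > 0"
    proof (rule ccontr)
      define E where "E = {u \<in> {0..un}. \<not> ((u, vs) \<in> G \<and> pv r (u, vs) > 0)}"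
      assume "\<not> (\<forall>u\<in>{0..un}. (u, vs) \<in> G \<and> pv r (u, vs) > 0)"
      then obtain x0 where "x0 \<in> {0..un}" "\<not> ((x0, vs) \<in> G \<and> pv r (x0, vs) > 0)" by blast
      then have x0: "x0 \<in> E" unfolding E_def by blast
      have Ene: "E \<noteq> {}" using x0 by auto
      have Ebdd: "bdd_below E" unfolding E_def by (rule bdd_belowI[of _ 0]) auto
      define u' where "u' = Inf E"
      have u'ge: "0 \<le> u'" unfolding u'_def using Ene by (intro cInf_greatest) (auto simp: E_def)
      have u'le: "u' \<le> un"
      proof -
        have "u' \<le> x0" unfolding u'_def using x0 Ebdd by (rule cInf_lower)
        then show ?thesis using x0 by (auto simp: E_def)
      qed
      have below: "(u, vs) \<in> G \<and> pv r (u, vs) > 0" if "0 \<le> u" "u < u'" for u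
      proof (rule ccontr)
        assume "\<not> ((u, vs) \<in> G \<and> pv r (u, vs) > 0)"
        then have "u \<in> E" using that u'le E_def by auto
        then have "u' \<le> u" unfolding u'_def using Ebdd by (rule cInf_lower)
        then show False using that by simp
      qed
      define p where "p = (u', vs)"
      have pK: "p \<in> K" using u'ge u'le un vs_gt v1 by (auto simp: Kdef p_def)
      have notgood: "\<not> (p \<in> G \<and> pv r p > 0)"
      proof
        assume pg: "p \<in> G \<and> pv r p > 0"
        have "\<exists>e>0. \<forall>x\<in>K. dist x p < e \<longrightarrow> x \<in> G \<and> pv r x > 0" using pg by (intro Gp_open) auto
        then obtain e where e: "e > 0" "\<forall>x\<in>K. dist x p < e \<longrightarrow> x \<in> G \<and> pv r x > 0"
          by (elim exE conjE) (rule that)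
        have "u' + e \<le> Inf E"
        proof (rule cInf_greatest[OF Ene])
          fix x assume xE: "x \<in> E"
          then have "u' \<le> x" unfolding u'_def using Ebdd by (rule cInf_lower)
          show "u' + e \<le> x"
          proof (rule ccontr)
            assume "\<not> u' + e \<le> x"
            then have "dist (x, vs) p < e" using \<open>u' \<le> x\<close> by (simp add: p_def dist_u)
            moreover have "(x, vs) \<in> K" using xE un vs_gt v1 by (auto simp: E_def Kdef)
            ultimately have "(x, vs) \<in> G \<and> pv r (x, vs) > 0" using e(2) by blast
            then show False using xE by (simp add: E_def)
          qed
        qed
        then show False using e(1) u'_def by simp
      qed
      have u'pos: "0 < u'"
      proof (rule ccontr)
        assume "\<not> 0 < u'"
        then have "u' = 0" using u'ge by simp
        then have "p \<in> Cout" using vs_gt v1 by (simp add: p_def Cout_def)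
        then have "p \<in> G \<and> pv r p > 0" using G_init VI by auto
        then show False using notgood by simp
      qed
      have pcl: "p \<in> closure_in K R"
        unfolding closure_in_def
      proof
        show "p \<in> K" by (rule pK)
        show "p \<in> closure R"
          unfolding closure_approachable
        proof (intro allI impI)
          fix \<epsilon> :: real assume "\<epsilon> > 0"
          define h where "h = min (\<epsilon>/2) ((vs - v1)/2)"
          have h: "0 < h" "h < \<epsilon>" "h < vs - v1" using \<open>\<epsilon> > 0\<close> vs_gt by (auto simp: h_def min_less_iff_disj)
          have "(u', vs - h) \<in> G \<and> pv r (u', vs - h) > 0"
            using claimA[of u' "vs - h"] u'ge u'le h by auto
          then have "(u', vs - h) \<in> R" using Rsub by blast
          moreover have "dist (u', vs - h) p < \<epsilon>" using h by (simp add: p_def dist_v)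
          ultimately show "\<exists>y\<in>R. dist y p < \<epsilon>" by blast
        qed
      qed
      have q0K: "(0, v1) \<in> K" using v1 by (auto simp: Kdef u0_pos less_imp_le)
      have q0R: "(0, v1) \<in> R" using Rsub q0 by blast
      have qcl: "(0, v1) \<in> closure_in K R \<inter> Iminus K p"
        using q0K q0R closure_subset[of R] u'pos vs_gt
        by (auto simp: closure_in_def Iminus_def p_def)
      have dia: "Jminus K p \<inter> Jplus K (0, v1) - {p} \<subseteq> R \<union> A"
      proof
        fix x assume x: "x \<in> Jminus K p \<inter> Jplus K (0, v1) - {p}"
        obtain a b where ab: "x = (a, b)" by (cases x)
        have abr: "0 \<le> a" "a \<le> u'" "v1 \<le> b" "b \<le> vs" "(a, b) \<noteq> (u', vs)"
          using x ab by (auto simp: Jminus_def Jplus_def p_def)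
        have "(a, b) \<in> G \<and> pv r (a, b) > 0"
        proof (cases "b < vs")
          case True then show ?thesis using claimA[of a b] abr u'le by auto
        next
          case False
          then have "b = vs" "a < u'" using abr by auto
          then show ?thesis using below[of a] abr by auto
        qed
        then show "x \<in> R \<union> A" using Rsub ab by blast
      qed
      have "p \<in> R \<union> A" using VII pcl qcl dia by blast
      then have pAA: "p \<in> A" using notgood by (auto simp: R_def)
      then have pA: "p \<in> G" "pv r p = 0" by (auto simp: A_def)
      have u'lt: "u' < un"
      proof (rule ccontr)
        assume "\<not> u' < un"
        then have "u' = un" using u'le by simp
        then show False using un(3) pAA vs_gt v1 by (auto simp: p_def)
      qed
      have rp: "r p \<ge> S - \<delta>"
      proof (rule ccontr)
        assume "\<not> r p \<ge> S - \<delta>"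
        then have "r p < S - \<delta>" by simp
        from cont_lt[OF cr[OF pA(1)] this] obtain e where e: "e > 0" "\<forall>x. dist x p < e \<longrightarrow> r x < S - \<delta>"
          by (elim exE conjE) (rule that)
        define h where "h = min (e/2) ((vs - v1)/2)"
        have h: "0 < h" "h < e" "h < vs - v1" using e(1) vs_gt by (auto simp: h_def min_less_iff_disj)
        have row: "\<forall>w'\<in>{v1..vs - h}. (un, w') \<in> G \<and> pv r (un, w') > 0"
          using claimA un h by auto
        have "r (u', vs - h) > S - \<delta>" using rbound[OF u'ge u'le _ row] h by simp
        moreover have "dist (u', vs - h) p < e" using h by (simp add: p_def dist_v)
        ultimately show False using e(2) by force
      qed
      have bneg: "pu (pv r) p < 0" using transv'[of u' vs] pA rp p_def by simp
      have "DERIV (\<lambda>s. pv r (s, vs)) u' :> pu (pv r) p" using D_u[OF drv[OF pA(1)]] p_def by simp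
      from DERIV_neg_dec_right[OF this bneg] obtain d where
        d: "d > 0" "\<forall>h>0. h < d \<longrightarrow> pv r (u', vs) > pv r (u' + h, vs)"
        by (elim exE conjE) (rule that)
      have "\<exists>e>0. \<forall>x'\<in>K. dist x' p < e \<longrightarrow> x' \<in> G" using Gopen' pA(1) by (rule bspec)
      then obtain e3 where e3: "e3 > 0" "\<forall>x'\<in>K. dist x' p < e3 \<longrightarrow> x' \<in> G"
        by (elim exE conjE) (rule that)
      define h where "h = min (d/2) (min (e3/2) ((un - u')/2))"
      have h0: "0 < h" "h < d" "h < e3" using d(1) e3(1) u'lt
        by (auto simp: h_def min_less_iff_disj)
      have "h \<le> (un - u')/2" unfolding h_def by (metis min.cobounded2 order_trans)
      have h4a: "u' + h \<le> u' + (un - u')/2" using \<open>h \<le> (un - u')/2\<close> by (rule add_left_mono)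
      have h4b: "u' + (un - u')/2 < un" using u'lt by (simp add: field_simps)
      have h4: "u' + h < un" using h4a h4b by (rule le_less_trans)
      note h = h0 h4
      define x where "x = (u' + h, vs)"
      have xK: "x \<in> K" using h u'ge un vs_gt v1 by (auto simp: x_def Kdef)
      have "dist x p < e3" using h by (simp add: x_def p_def dist_u)
      then have xG: "x \<in> G" using e3(2) xK by blast
      have xneg: "pv r x < 0" using d(2) h pA(2) by (auto simp: x_def p_def)
      from cont_lt[OF crv[OF xG] xneg] obtain e4 where e4: "e4 > 0" "\<forall>y. dist y x < e4 \<longrightarrow> pv r y < 0"
        by (elim exE conjE) (rule that)
      define h2 where "h2 = min (e4/2) ((vs - v1)/2)"
      have h2: "0 < h2" "h2 < e4" "h2 < vs - v1" using e4(1) vs_gt by (auto simp: h2_def min_less_iff_disj)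
      have "pv r (u' + h, vs - h2) > 0" using claimA[of "u' + h" "vs - h2"] h h2 u'ge by auto
      moreover have "dist (u' + h, vs - h2) x < e4" using h2 by (simp add: x_def dist_v)
      ultimately show False using e4(2) by force
    qed
    have "P vs" unfolding P_def
    proof (intro ballI)
      fix u w assume "u \<in> {0..un}" "w \<in> {v1..vs}"
      then show "(u, w) \<in> G \<and> pv r (u, w) > 0" using claimA edge by (cases "w < vs") auto
    qed
    then obtain \<eta> where eta: "\<eta> > 0" "P (vs + \<eta>)" using EXT[of vs] vs_gt by auto
    then have "vs + \<eta> \<in> Ss" using vs_gt Ss_def by simp
    then have "vs + \<eta> \<le> Sup Ss" using bdd by (rule cSup_upper)
    then show False using eta vs_def by simp
  qed
  show ?thesis
  proof (intro exI conjI)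
    show "0 < un" "un \<le> u0" "v0 \<le> v1" using un v1 by auto
    show "Kset un v1 \<subseteq> W \<inter> R"
    proof
      fix x assume "x \<in> Kset un v1"
      then obtain u w where x: "x = (u, w)" "0 \<le> u" "u \<le> un" "v1 \<le> w" by (auto simp: Kset_def)
      have Pw: "P w" using Pall x by auto
      then have g: "(u, w) \<in> G" "pv r (u, w) > 0" using x unfolding P_def by auto
      have "\<forall>w'\<in>{v1..w}. (un, w') \<in> G \<and> pv r (un, w') > 0" using Pw un unfolding P_def by auto
      then have "r (u, w) > S - \<delta>" using rbound x by auto
      then show "x \<in> W \<inter> R" using g ru_neg[OF g(1)] x by (auto simp: W_def R_def S_eq)
    qed
  qed
qed
end
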